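(* Let $\Lambda_1$ be a subgroup of $\mathbf{R}^m$ and $\Lambda_2$ a subgroup of $\mathbf{R}^m$ such that $\Lambda_1\oplus\Lambda_2$ is a lattice of covolume $1$ of $\mathbf{R}^m$, and let $C\subset\mathbf{R}^m$ be compact. Let $C_1$ be the projection of $C$ on $\mathbf{R}^m/\Lambda_1$ and $C_2$ the projection of $C$ on $\mathbf{R}^m/(\Lambda_1\oplus\Lambda_2)$, and set \[D_1=\operatorname{Leb}\big\{x\in C_1\mid\operatorname{Card}\{\lambda_2\in\Lambda_2\mid x\in C_1+\lambda_2\}\ge2\big\}.\] Then $\operatorname{Leb}(C_2)\le\operatorname{Leb}(C_1)-D_1/2$.
   Context: $\operatorname{Leb}$ denotes the measure induced by Lebesgue measure on the quotients of $\mathbf{R}^m$; $\Lambda_2$ acts by translation on $\mathbf{R}^m/\Lambda_1$. *)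

theory Defs
  imports "HOL-Analysis.Analysis"
begin

definition add_subgroup :: "(real^'m) set \<Rightarrow> bool" where
  "add_subgroup G \<longleftrightarrow> 0 \<in> G \<and> (\<forall>x\<in>G. \<forall>y\<in>G. x + y \<in> G) \<and> (\<forall>x\<in>G. - x \<in> G)"

text \<open>A lattice of R^m: the integer span of the columns of an invertible matrix B;
  its covolume is the absolute value of the determinant of B.\<close>
definition lattice_with_basis :: "real^'m^'m \<Rightarrow> (real^'m) set" where
  "lattice_with_basis B = {B *v (\<chi> i. of_int (k $ i)) | k :: int^'m. True}"

definition lattice_covol1 :: "(real^'m) set \<Rightarrow> bool" where
  "lattice_covol1 L \<longleftrightarrow> (\<exists>B. invertible B \<and> L = lattice_with_basis B \<and> \<bar>det B\<bar> = 1)"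

definition set_sum :: "(real^'m) set \<Rightarrow> (real^'m) set \<Rightarrow> (real^'m) set" where
  "set_sum A B = {a + b | a b. a \<in> A \<and> b \<in> B}"

text \<open>Subsets of R^m / Lambda are represented by their (Lambda-invariant) preimages in R^m.
  The projection of C to R^m / Lambda is thus C + Lambda.\<close>
definition proj_quot :: "(real^'m) set \<Rightarrow> (real^'m) set \<Rightarrow> (real^'m) set" where
  "proj_quot \<Lambda> C = set_sum C \<Lambda>"

definition fund_domain :: "(real^'m) set \<Rightarrow> (real^'m) set \<Rightarrow> bool" where
  "fund_domain \<Lambda> F \<longleftrightarrow> F \<in> sets lebesgue \<and> (\<forall>x. \<exists>!l. l \<in> \<Lambda> \<and> x + l \<in> F)"

text \<open>Measure on R^m / Lambda induced by Lebesgue measure, applied to a Lambda-invariant set A: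
  Lebesgue measure of A intersected with a measurable fundamental domain.\<close>
definition quot_leb :: "(real^'m) set \<Rightarrow> (real^'m) set \<Rightarrow> ennreal" where
  "quot_leb \<Lambda> A = emeasure lebesgue (A \<inter> (SOME F. fund_domain \<Lambda> F))"

end

theory Submission
  imports Defs
begin


lemma tr_sets: fixes A :: "(real^'m) set"
  shows "A \<in> sets lebesgue \<Longrightarrow> (\<lambda>x. x + c) ` A \<in> sets lebesgue"
  using lebesgue_sets_translation[of A c] by (simp add: add.commute)

lemma tr_emeas: fixes A :: "(real^'m) set"
  shows "emeasure lebesgue ((\<lambda>x. x + c) ` A) = emeasure lebesgue A"
  using emeasure_lebesgue_affine[of 1 c A] by simp

lemma lattice_countable: "countable (lattice_with_basis (B::real^'m^'m))"
proof -
  have "lattice_with_basis B = (\<lambda>k::int^'m. B *v (\<chi> i. of_int (k $ i))) ` UNIV"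
    unfolding lattice_with_basis_def by auto
  then show ?thesis by simp
qed

lemma shift_eq: fixes G :: "(real^'m) set"
  shows "{x. x + l \<in> G} = (\<lambda>x. x + (- l)) ` G"
proof (rule set_eqI, rule iffI)
  fix x assume "x \<in> {x. x + l \<in> G}" then show "x \<in> (\<lambda>x. x + (- l)) ` G"
    by (intro image_eqI[of _ _ "x + l"]) auto
qed auto

lemma shift_eq2: fixes G :: "(real^'m) set"
  shows "{x. x - l \<in> G} = (\<lambda>x. x + l) ` G"
proof (rule set_eqI, rule iffI)
  fix x assume "x \<in> {x. x - l \<in> G}" then show "x \<in> (\<lambda>x. x + l) ` G"
    by (intro image_eqI[of _ _ "x - l"]) auto
qed auto

lemma fund_unique_minus:
  assumes "add_subgroup \<Lambda>" "fund_domain \<Lambda> F"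
  shows "\<exists>!l. l \<in> \<Lambda> \<and> x - l \<in> F"
proof -
  from assms(2) obtain l where l: "l \<in> \<Lambda>" "x + l \<in> F"
    and u: "\<And>l'. l' \<in> \<Lambda> \<Longrightarrow> x + l' \<in> F \<Longrightarrow> l' = l"
    unfolding fund_domain_def by metis
  have neg: "\<And>y. y \<in> \<Lambda> \<Longrightarrow> - y \<in> \<Lambda>" using assms(1) unfolding add_subgroup_def by blast
  show ?thesis
  proof (rule ex1I[of _ "- l"])
    show "- l \<in> \<Lambda> \<and> x - - l \<in> F" using l neg by simp
    fix y assume "y \<in> \<Lambda> \<and> x - y \<in> F"
    then have "- y = l" using u[of "- y"] neg by simp
    then show "y = - l" by auto
  qed
qed

lemma fund_uniq:
  assumes "fund_domain \<Lambda> F" "l \<in> \<Lambda>" "x + l \<in> F" "l' \<in> \<Lambda>" "x + l' \<in> F"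
  shows "l' = l"
proof -
  from assms(1) have "\<exists>!l. l \<in> \<Lambda> \<and> x + l \<in> F" unfolding fund_domain_def by blast
  then obtain l0 where "\<forall>y. y \<in> \<Lambda> \<and> x + y \<in> F \<longrightarrow> y = l0" by (rule ex1E) blast
  then show ?thesis using assms(2-5) by blast
qed

lemma fund_indep:
  fixes \<Lambda> F G A :: "(real^'m) set"
  assumes sg: "add_subgroup \<Lambda>" and cnt: "countable \<Lambda>"
    and fF: "fund_domain \<Lambda> F" and fG: "fund_domain \<Lambda> G"
    and Am: "A \<in> sets lebesgue"
    and inv: "\<And>x l. x \<in> A \<Longrightarrow> l \<in> \<Lambda> \<Longrightarrow> x + l \<in> A"
  shows "emeasure lebesgue (A \<inter> F) = emeasure lebesgue (A \<inter> G)"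
proof -
  have Fm: "F \<in> sets lebesgue" and Gm: "G \<in> sets lebesgue"
    using fF fG unfolding fund_domain_def by auto
  have neg: "\<And>y. y \<in> \<Lambda> \<Longrightarrow> - y \<in> \<Lambda>" using sg unfolding add_subgroup_def by blast
  define X where "X l = A \<inter> F \<inter> {x. x + l \<in> G}" for l
  define Y where "Y l = A \<inter> G \<inter> {x. x - l \<in> F}" for l
  have Xm: "X l \<in> sets lebesgue" for l
    unfolding X_def shift_eq using Am Fm Gm tr_sets by blast
  have Ym: "Y l \<in> sets lebesgue" for l
    unfolding Y_def shift_eq2 using Am Fm Gm tr_sets by blast
  have XU: "A \<inter> F = \<Union>(X ` \<Lambda>)"
    using fG unfolding X_def fund_domain_def by blast
  have YU: "A \<inter> G = \<Union>(Y ` \<Lambda>)"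
  proof
    show "A \<inter> G \<subseteq> \<Union>(Y ` \<Lambda>)"
    proof
      fix x assume "x \<in> A \<inter> G"
      moreover obtain l where "l \<in> \<Lambda>" "x - l \<in> F" using fund_unique_minus[OF sg fF, of x] by blast
      ultimately show "x \<in> \<Union>(Y ` \<Lambda>)" unfolding Y_def by blast
    qed
  qed (auto simp: Y_def)
  have Xd: "disjoint_family_on X \<Lambda>"
    unfolding disjoint_family_on_def X_def using fG unfolding fund_domain_def by blast
  have Yd: "disjoint_family_on Y \<Lambda>"
    unfolding disjoint_family_on_def Y_def using fund_unique_minus[OF sg fF] by blast
  have XY: "(\<lambda>x. x + l) ` X l = Y l" if l: "l \<in> \<Lambda>" for l
  proof
    show "(\<lambda>x. x + l) ` X l \<subseteq> Y l" unfolding X_def Y_def using inv l by auto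
    show "Y l \<subseteq> (\<lambda>x. x + l) ` X l"
    proof
      fix y assume y: "y \<in> Y l"
      have "y - l \<in> A" using inv[of y "- l"] neg[OF l] y unfolding Y_def by simp
      then have "y - l \<in> X l" using y unfolding X_def Y_def by simp
      then show "y \<in> (\<lambda>x. x + l) ` X l" by (auto simp: image_iff intro!: bexI[of _ "y - l"])
    qed
  qed
  have "emeasure lebesgue (A \<inter> F) = (\<integral>\<^sup>+l. emeasure lebesgue (X l) \<partial>count_space \<Lambda>)"
    unfolding XU by (rule emeasure_UN_countable[OF Xm cnt Xd])
  also have "\<dots> = (\<integral>\<^sup>+l. emeasure lebesgue (Y l) \<partial>count_space \<Lambda>)"
    by (rule nn_integral_cong) (metis XY tr_emeas space_count_space)
  also have "\<dots> = emeasure lebesgue (A \<inter> G)"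
    unfolding YU by (rule emeasure_UN_countable[OF Ym cnt Yd, symmetric])
  finally show ?thesis .
qed



definition FD :: "real^'m^'m \<Rightarrow> (real^'m) set" where
  "FD Bi = {x. \<forall>i. 0 \<le> (Bi *v x)$i \<and> (Bi *v x)$i < 1}"

lemma int_unique: fixes a :: real and n n' :: int
  assumes "0 \<le> a + n" "a + n < 1" "0 \<le> a + n'" "a + n' < 1" shows "n = n'"
proof -
  have "of_int (n - n') < (1::real)" "of_int (n' - n) < (1::real)" using assms by simp_all
  then have "n - n' < 1" "n' - n < 1" by (metis of_int_1 of_int_less_iff)+
  then show ?thesis by linarith
qed

lemma frac_bounds: fixes a :: real shows "0 \<le> a + of_int (- \<lfloor>a\<rfloor>) \<and> a + of_int (- \<lfloor>a\<rfloor>) < 1"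
proof -
  have "of_int \<lfloor>a\<rfloor> \<le> a" "a < of_int \<lfloor>a\<rfloor> + 1" using floor_correct[of a] by auto
  then show ?thesis unfolding of_int_minus by linarith
qed

lemma FD_meas: "FD (Bi::real^'m^'m) \<in> sets lebesgue"
proof -
  have c: "continuous_on UNIV (\<lambda>x. (Bi *v x) $ i)" for i
    by (intro continuous_intros linear_continuous_on) (simp add: linear_conv_bounded_linear[symmetric])
  have e: "FD Bi = (\<Inter>i\<in>UNIV. {x. 0 \<le> (Bi *v x)$i} \<inter> {x. (Bi *v x)$i < 1})"
    unfolding FD_def by auto
  have m1: "{x. 0 \<le> (Bi *v x)$i} \<in> sets lebesgue" for i
  proof -
    have "closed {x. 0 \<le> (Bi *v x)$i}" using c[of i] by (intro closed_Collect_le) auto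
    then show ?thesis by (simp add: sets_completionI_sets)
  qed
  have m2: "{x. (Bi *v x)$i < 1} \<in> sets lebesgue" for i
  proof -
    have "open {x. (Bi *v x)$i < 1}" using c[of i] by (intro open_Collect_less) auto
    then show ?thesis by (simp add: sets_completionI_sets)
  qed
  show ?thesis unfolding e by (rule sets.countable_INT) (auto intro!: sets.Int m1 m2)
qed

lemma FD_fund:
  fixes B Bi :: "real^'m^'m"
  assumes inv1: "B ** Bi = mat 1" and inv2: "Bi ** B = mat 1"
  shows "fund_domain (lattice_with_basis B) (FD Bi)"
  unfolding fund_domain_def
proof
  show "FD Bi \<in> sets lebesgue" by (rule FD_meas)
next
  have BiB: "Bi *v (B *v v) = v" for v by (simp add: matrix_vector_mul_assoc inv2)
  have BBi: "B *v (Bi *v v) = v" for v by (simp add: matrix_vector_mul_assoc inv1)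
  show "\<forall>x. \<exists>!l. l \<in> lattice_with_basis B \<and> x + l \<in> FD Bi"
  proof
    fix x
    define k where "k = (\<chi> i. - \<lfloor>(Bi *v x)$i\<rfloor>)"
    define l where "l = B *v (\<chi> i. of_int (k $ i))"
    have lL: "l \<in> lattice_with_basis B" unfolding lattice_with_basis_def l_def by blast
    have "Bi *v (x + l) = Bi *v x + (\<chi> i. of_int (k $ i))"
      by (simp add: l_def BiB matrix_vector_right_distrib)
    then have "x + l \<in> FD Bi" unfolding FD_def k_def using frac_bounds by simp
    moreover
    have "l' = l" if l': "l' \<in> lattice_with_basis B" "x + l' \<in> FD Bi" for l'
    proof -
      obtain k' :: "int^'m" where k': "l' = B *v (\<chi> i. of_int (k' $ i))"
        using l'(1) unfolding lattice_with_basis_def by blast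
      have e1: "Bi *v (x + l') = Bi *v x + (\<chi> i. of_int (k' $ i))"
        by (simp add: k' BiB matrix_vector_right_distrib)
      have e2: "Bi *v (x + l) = Bi *v x + (\<chi> i. of_int (k $ i))"
        by (simp add: l_def BiB matrix_vector_right_distrib)
      have h1: "\<forall>i. 0 \<le> (Bi *v x + (\<chi> i. of_int (k' $ i)))$i \<and> (Bi *v x + (\<chi> i. of_int (k' $ i)))$i < 1"
        using l'(2)[unfolded FD_def mem_Collect_eq e1] .
      have h2: "\<forall>i. 0 \<le> (Bi *v x + (\<chi> i. of_int (k $ i)))$i \<and> (Bi *v x + (\<chi> i. of_int (k $ i)))$i < 1"
        using \<open>x + l \<in> FD Bi\<close>[unfolded FD_def mem_Collect_eq e2] .
      have "k' $ i = k $ i" for i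
        using h1[rule_format, of i] h2[rule_format, of i]
        by (intro int_unique[of "(Bi *v x)$i"]) auto
      then have "k' = k" by (simp add: vec_eq_iff)
      then show ?thesis by (simp add: k' l_def)
    qed
    ultimately show "\<exists>!l. l \<in> lattice_with_basis B \<and> x + l \<in> FD Bi" using lL by blast
  qed
qed

lemma FD_bounded:
  fixes B Bi :: "real^'m^'m"
  assumes inv1: "B ** Bi = mat 1"
  shows "bounded (FD Bi)"
proof -
  have BBi: "B *v (Bi *v v) = v" for v by (simp add: matrix_vector_mul_assoc inv1)
  have "FD Bi \<subseteq> (\<lambda>y. B *v y) ` cbox 0 1"
  proof
    fix x assume "x \<in> FD Bi"
    then have "Bi *v x \<in> cbox 0 1" unfolding FD_def by (auto simp: mem_box_cart less_imp_le)
    then show "x \<in> (\<lambda>y. B *v y) ` cbox 0 1" using BBi[of x] by (metis image_eqI)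
  qed
  moreover have "bounded ((\<lambda>y. B *v y) ` cbox 0 1)"
    by (rule bounded_linear_image) (auto simp: linear_conv_bounded_linear[symmetric])
  ultimately show ?thesis using bounded_subset by blast
qed

lemma lattice_finite:
  fixes B Bi :: "real^'m^'m" and T :: "(real^'m) set"
  assumes inv2: "Bi ** B = mat 1" and T: "bounded T"
  shows "finite (lattice_with_basis B \<inter> T)"
proof -
  have BiB: "Bi *v (B *v v) = v" for v by (simp add: matrix_vector_mul_assoc inv2)
  have "bounded ((\<lambda>y. Bi *v y) ` T)"
    by (rule bounded_linear_image[OF T]) (auto simp: linear_conv_bounded_linear[symmetric])
  then obtain R where R: "\<And>y. y \<in> T \<Longrightarrow> norm (Bi *v y) \<le> R"
    unfolding bounded_iff by auto
  define N where "N = \<lceil>R\<rceil>"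
  have "lattice_with_basis B \<inter> T \<subseteq> (\<lambda>f. B *v (\<chi> i. of_int (f i))) ` (PiE UNIV (\<lambda>_. {-N..N}))"
  proof
    fix l assume l: "l \<in> lattice_with_basis B \<inter> T"
    then obtain k :: "int^'m" where k: "l = B *v (\<chi> i. of_int (k $ i))"
      unfolding lattice_with_basis_def by blast
    have eq: "Bi *v l = (\<chi> i. of_int (k $ i))" using k BiB by simp
    have "norm (Bi *v l) \<le> R" using R l by blast
    then have "norm (\<chi> i. (of_int (k $ i)::real)) \<le> R" by (simp only: eq)
    then have "\<bar>of_int (k $ i)::real\<bar> \<le> R" for i
      using component_le_norm_cart[of "\<chi> i. (of_int (k $ i)::real)" i] by simp
    then have "k $ i \<in> {-N..N}" for i
    proof -
      have a: "\<bar>of_int (k $ i)::real\<bar> \<le> R" by fact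
      have b: "R \<le> of_int N" unfolding N_def by (rule le_of_int_ceiling)
      have "of_int (k $ i) \<le> (of_int N::real)" "of_int (- N) \<le> (of_int (k $ i)::real)"
        using a b by linarith+
      then show ?thesis by (simp only: of_int_le_iff atLeastAtMost_iff)
    qed
    then have "(\<lambda>i. k $ i) \<in> PiE UNIV (\<lambda>_. {-N..N})" by auto
    then show "l \<in> (\<lambda>f. B *v (\<chi> i. of_int (f i))) ` (PiE UNIV (\<lambda>_. {-N..N}))"
      using k by (auto intro!: image_eqI[of _ _ "\<lambda>i. k $ i"])
  qed
  moreover have "finite (PiE (UNIV::'m set) (\<lambda>_. {-N..N}))" by (intro finite_PiE) auto
  ultimately show ?thesis using finite_subset by blast
qed


lemma ennr_aux: "(a::ennreal) \<le> 1 \<Longrightarrow> b \<le> of_nat n \<Longrightarrow> 2 \<le> n \<Longrightarrow> a + b / 2 \<le> of_nat n"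
proof -
  assume a: "a \<le> 1" and b: "b \<le> of_nat n" and n: "2 \<le> n"
  have "a + b / 2 \<le> 1 + of_nat n / 2" by (intro add_mono divide_right_mono_ennreal a b)
  also have "(1::ennreal) + of_nat n / 2 = ennreal (1 + real n / 2)"
  proof -
    have h: "ennreal (real n) / 2 = ennreal (real n / 2)" using divide_ennreal[of "real n" 2] by simp
    have "ennreal (1 + real n / 2) = ennreal 1 + ennreal (real n / 2)" by (rule ennreal_plus) auto
    then show ?thesis by (simp add: ennreal_of_nat_eq_real_of_nat h)
  qed
  also have "\<dots> \<le> ennreal (real n)" using n by (intro ennreal_leI) simp
  also have "\<dots> = of_nat n" by (simp add: ennreal_of_nat_eq_real_of_nat)
  finally show ?thesis .
qed


theorem corollary2p14:
  fixes \<Lambda>1 \<Lambda>2 C :: "(real^'m) set"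
  assumes "add_subgroup \<Lambda>1" and "add_subgroup \<Lambda>2"
    and "\<Lambda>1 \<inter> \<Lambda>2 = {0}"
    and "lattice_covol1 (set_sum \<Lambda>1 \<Lambda>2)"
    and "compact C"
  shows "quot_leb (set_sum \<Lambda>1 \<Lambda>2) (proj_quot (set_sum \<Lambda>1 \<Lambda>2) C)
         \<le> quot_leb \<Lambda>1 (proj_quot \<Lambda>1 C)
           - quot_leb \<Lambda>1 {x \<in> proj_quot \<Lambda>1 C.
                let S = {l \<in> \<Lambda>2. x \<in> (\<lambda>y. y + l) ` proj_quot \<Lambda>1 C}
                in infinite S \<or> card S \<ge> 2} / 2"
proof -
  define L where "L = set_sum \<Lambda>1 \<Lambda>2"
  have g1: "0 \<in> \<Lambda>1" "\<And>x y. x \<in> \<Lambda>1 \<Longrightarrow> y \<in> \<Lambda>1 \<Longrightarrow> x + y \<in> \<Lambda>1" "\<And>x. x \<in> \<Lambda>1 \<Longrightarrow> - x \<in> \<Lambda>1"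
    using assms(1) unfolding add_subgroup_def by auto
  have g2: "0 \<in> \<Lambda>2" "\<And>x y. x \<in> \<Lambda>2 \<Longrightarrow> y \<in> \<Lambda>2 \<Longrightarrow> x + y \<in> \<Lambda>2" "\<And>x. x \<in> \<Lambda>2 \<Longrightarrow> - x \<in> \<Lambda>2"
    using assms(2) unfolding add_subgroup_def by auto
  obtain B where Binv: "invertible B" and LB: "L = lattice_with_basis B"
    using assms(4) unfolding lattice_covol1_def L_def by blast
  obtain Bi where i1: "B ** Bi = mat 1" "Bi ** B = mat 1"
    using Binv unfolding invertible_def by blast
  define F' where "F' = FD Bi"
  have fF: "fund_domain L F'" using FD_fund[OF i1] LB F'_def by simp
  have Fm: "F' \<in> sets lebesgue" using FD_meas F'_def by simp
  have Fb: "bounded F'" using FD_bounded[OF i1(1)] F'_def by simp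
  have Lfin: "\<And>T. bounded T \<Longrightarrow> finite (L \<inter> T)" using lattice_finite[OF i1(2)] LB by simp
  have Lcnt: "countable L" using lattice_countable LB by simp
  have Lmem: "\<And>x. x \<in> L \<longleftrightarrow> (\<exists>a\<in>\<Lambda>1. \<exists>b\<in>\<Lambda>2. x = a + b)"
    unfolding L_def set_sum_def by auto
  have Lin: "a + b \<in> L" if "a \<in> \<Lambda>1" "b \<in> \<Lambda>2" for a b
    using that unfolding L_def set_sum_def by blast
  have L1sub: "\<Lambda>1 \<subseteq> L" using Lin[of _ 0] g2(1) by auto
  have L2sub: "\<Lambda>2 \<subseteq> L" using Lin[of 0] g1(1) by auto
  have cnt1: "countable \<Lambda>1" using L1sub Lcnt countable_subset by blast
  have cnt2: "countable \<Lambda>2" using L2sub Lcnt countable_subset by blast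
  have sgL: "add_subgroup L"
    unfolding add_subgroup_def
  proof (intro conjI ballI)
    show "0 \<in> L" using Lin[OF g1(1) g2(1)] by simp
  next
    fix x y assume "x \<in> L" "y \<in> L"
    then obtain a b a' b' where m: "a \<in> \<Lambda>1" "b \<in> \<Lambda>2" "a' \<in> \<Lambda>1" "b' \<in> \<Lambda>2"
      and xy: "x = a + b" "y = a' + b'"
      using Lmem by metis
    have "x + y = (a + a') + (b + b')" unfolding xy by (simp add: algebra_simps)
    then show "x + y \<in> L" using Lin[OF g1(2)[OF m(1,3)] g2(2)[OF m(2,4)]] by simp
  next
    fix x assume "x \<in> L"
    then obtain a b where m: "a \<in> \<Lambda>1" "b \<in> \<Lambda>2" and xy: "x = a + b" using Lmem by metis
    have "- x = - a + - b" unfolding xy by (simp add: algebra_simps)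
    then show "- x \<in> L" using Lin[OF g1(3)[OF m(1)] g2(3)[OF m(2)]] by simp
  qed
  have direct: "a = a' \<and> b = b'" if "a \<in> \<Lambda>1" "b \<in> \<Lambda>2" "a' \<in> \<Lambda>1" "b' \<in> \<Lambda>2" "a + b = a' + b'" for a b a' b'
  proof -
    have m: "a + - a' \<in> \<Lambda>1" "b' + - b \<in> \<Lambda>2"
      using g1(2)[OF that(1) g1(3)[OF that(3)]] g2(2)[OF that(4) g2(3)[OF that(2)]] by auto
    have "a + - a' = (a + b) + - a' + - b" by (simp add: algebra_simps)
    also have "\<dots> = (a' + b') + - a' + - b" by (simp only: that(5))
    also have "\<dots> = b' + - b" by (simp add: algebra_simps)
    finally have e: "a + - a' = b' + - b" .
    then have "a + - a' \<in> \<Lambda>1 \<inter> \<Lambda>2" using m by simp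
    then have "a + - a' = 0" using assms(3) by blast
    then have "a = a'" by (simp add: eq_neg_iff_add_eq_0)
    moreover then have "b = b'" using that(5) by simp
    ultimately show ?thesis by simp
  qed

  define C1 where "C1 = proj_quot \<Lambda>1 C"
  define C2 where "C2 = proj_quot L C"
  have C1mem: "\<And>x. x \<in> C1 \<longleftrightarrow> (\<exists>c\<in>C. \<exists>a\<in>\<Lambda>1. x = c + a)"
    unfolding C1_def proj_quot_def set_sum_def by auto
  have C2mem: "\<And>x. x \<in> C2 \<longleftrightarrow> (\<exists>c\<in>C. \<exists>a\<in>L. x = c + a)"
    unfolding C2_def proj_quot_def set_sum_def by auto
  have LE: "\<exists>a b. a \<in> \<Lambda>1 \<and> b \<in> \<Lambda>2 \<and> l = a + b" if "l \<in> L" for l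
    using that unfolding Lmem by blast
  have C1in: "c + a \<in> C1" if "c \<in> C" "a \<in> \<Lambda>1" for c a
    using that unfolding C1mem by blast
  have C1E: "\<exists>c a. c \<in> C \<and> a \<in> \<Lambda>1 \<and> x = c + a" if "x \<in> C1" for x
    using that unfolding C1mem by blast
  have C2in: "c + a \<in> C2" if "c \<in> C" "a \<in> L" for c a
    using that unfolding C2mem by blast
  have C2E: "\<exists>c a. c \<in> C \<and> a \<in> L \<and> x = c + a" if "x \<in> C2" for x
    using that unfolding C2mem by blast
  have Cm: "C \<in> sets lebesgue"
    using compact_imp_closed[OF assms(5)] by (simp add: sets_completionI_sets)
  have C1m: "C1 \<in> sets lebesgue"
  proof -
    have "C1 = (\<Union>a\<in>\<Lambda>1. (\<lambda>x. x + a) ` C)"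
      by (rule set_eqI) (simp only: C1mem UN_iff image_iff, blast)
    also have "\<dots> \<in> sets lebesgue" using cnt1 tr_sets[OF Cm] by (intro sets.countable_UN'') auto
    finally show ?thesis .
  qed
  have C2m: "C2 \<in> sets lebesgue"
  proof -
    have "C2 = (\<Union>a\<in>L. (\<lambda>x. x + a) ` C)"
      by (rule set_eqI) (simp only: C2mem UN_iff image_iff, blast)
    also have "\<dots> \<in> sets lebesgue" using Lcnt tr_sets[OF Cm] by (intro sets.countable_UN'') auto
    finally show ?thesis .
  qed
  define D where "D = {x \<in> C1. \<exists>\<mu>\<in>\<Lambda>2. \<mu> \<noteq> 0 \<and> x - \<mu> \<in> C1}"
  have Deq: "{x \<in> proj_quot \<Lambda>1 C.
                let S = {l \<in> \<Lambda>2. x \<in> (\<lambda>y. y + l) ` proj_quot \<Lambda>1 C}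
                in infinite S \<or> card S \<ge> 2} = D"
  proof -
    have "(infinite S \<or> card S \<ge> 2) \<longleftrightarrow> (\<exists>\<mu>\<in>\<Lambda>2. \<mu> \<noteq> 0 \<and> x - \<mu> \<in> C1)"
      if x: "x \<in> C1" and S: "S = {l \<in> \<Lambda>2. x \<in> (\<lambda>y. y + l) ` C1}" for x S
    proof -
      have Smem: "l \<in> S \<longleftrightarrow> l \<in> \<Lambda>2 \<and> x - l \<in> C1" for l
        unfolding S shift_eq2[symmetric] by simp
      have "0 \<in> S" using Smem x g2(1) by simp
      show ?thesis
      proof
        assume "infinite S \<or> card S \<ge> 2"
        then have "\<not> S \<subseteq> {0}"
        proof (elim disjE)
          assume "infinite S" then show ?thesis using finite_subset by blast
        next
          assume c: "card S \<ge> 2"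
          show ?thesis
          proof
            assume "S \<subseteq> {0}"
            then have "card S \<le> card {0::real^'m}" by (intro card_mono) auto
            then show False using c by simp
          qed
        qed
        then show "\<exists>\<mu>\<in>\<Lambda>2. \<mu> \<noteq> 0 \<and> x - \<mu> \<in> C1" using Smem by auto
      next
        assume "\<exists>\<mu>\<in>\<Lambda>2. \<mu> \<noteq> 0 \<and> x - \<mu> \<in> C1"
        then obtain \<mu> where "\<mu> \<in> S" "\<mu> \<noteq> 0" using Smem by auto
        then have "{0, \<mu>} \<subseteq> S" using \<open>0 \<in> S\<close> by auto
        moreover have "card {0, \<mu>} = 2" using \<open>\<mu> \<noteq> 0\<close> by simp
        show "infinite S \<or> card S \<ge> 2"
        proof (cases "finite S")
          case True
          then show ?thesis using card_mono[OF True \<open>{0, \<mu>} \<subseteq> S\<close>] \<open>card {0, \<mu>} = 2\<close> by simp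
        qed simp
      qed
    qed
    then show ?thesis unfolding D_def C1_def[symmetric] Let_def by auto
  qed
  have Dm: "D \<in> sets lebesgue"
  proof -
    have "D = C1 \<inter> (\<Union>\<mu>\<in>\<Lambda>2 - {0}. (\<lambda>x. x + \<mu>) ` C1)"
      unfolding D_def shift_eq2[symmetric] by blast
    also have "\<dots> \<in> sets lebesgue" using cnt2 tr_sets[OF C1m] C1m
      by (intro sets.Int sets.countable_UN'') auto
    finally show ?thesis .
  qed
  define G' where "G' = {x. \<exists>\<nu>\<in>\<Lambda>2. x - \<nu> \<in> F'}"
  have Gm: "G' \<in> sets lebesgue"
  proof -
    have "G' = (\<Union>\<nu>\<in>\<Lambda>2. (\<lambda>x. x + \<nu>) ` F')"
      unfolding G'_def shift_eq2[symmetric] by blast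
    also have "\<dots> \<in> sets lebesgue" using cnt2 tr_sets[OF Fm] by (intro sets.countable_UN'') auto
    finally show ?thesis .
  qed
  have fG: "fund_domain \<Lambda>1 G'"
    unfolding fund_domain_def
  proof (intro conjI Gm allI)
    fix x
    have "\<exists>!l. l \<in> L \<and> x + l \<in> F'" using fF unfolding fund_domain_def by (rule conjunct2[THEN spec])
    then obtain l where l: "l \<in> L" "x + l \<in> F'" by (rule ex1E) blast
    obtain a b where ab: "a \<in> \<Lambda>1" "b \<in> \<Lambda>2" "l = a + b" using LE[OF l(1)] by blast
    have e: "x + a - (- b) = x + l" using ab(3) by (simp add: algebra_simps)
    have "x + a \<in> G'" unfolding G'_def mem_Collect_eq
      by (intro bexI[of _ "- b"]) (simp_all only: e l(2) g2(3)[OF ab(2)])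
    moreover have "a' = a" if a'm: "a' \<in> \<Lambda>1" and a'G: "x + a' \<in> G'" for a'
    proof -
      obtain \<nu> where \<nu>: "\<nu> \<in> \<Lambda>2" "x + a' - \<nu> \<in> F'" using a'G unfolding G'_def by blast
      have "a' + - \<nu> \<in> L" by (rule Lin[OF a'm g2(3)[OF \<nu>(1)]])
      moreover have "x + (a' + - \<nu>) \<in> F'" using \<nu>(2) by (simp add: algebra_simps)
      ultimately have "a' + - \<nu> = l" by (rule fund_uniq[OF fF l])
      then have "a' + - \<nu> = a + b" using ab(3) by simp
      then show ?thesis using direct[OF a'm g2(3)[OF \<nu>(1)] ab(1,2)] by blast
    qed
    ultimately show "\<exists>!l. l \<in> \<Lambda>1 \<and> x + l \<in> G'" using ab(1) by (intro ex1I[of _ a]) blast+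
  qed
  have invC1: "x + l \<in> C1" if hx: "x \<in> C1" and hl: "l \<in> \<Lambda>1" for x l
  proof -
    obtain c a where ca: "c \<in> C" "a \<in> \<Lambda>1" "x = c + a" using C1E[OF hx] by blast
    have "x + l = c + (a + l)" using ca(3) by (simp add: algebra_simps)
    then show ?thesis using C1in[OF ca(1) g1(2)[OF ca(2) hl]] by (simp only:)
  qed
  have invD: "x + l \<in> D" if hx: "x \<in> D" and hl: "l \<in> \<Lambda>1" for x l
  proof -
    obtain \<mu> where m: "\<mu> \<in> \<Lambda>2" "\<mu> \<noteq> 0" "x - \<mu> \<in> C1" "x \<in> C1" using hx unfolding D_def by blast
    have "x + l - \<mu> \<in> C1" using invC1[OF m(3) hl] by (simp add: algebra_simps)
    moreover have "x + l \<in> C1" using invC1[OF m(4) hl] .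
    ultimately show ?thesis unfolding D_def using m(1,2) by blast
  qed
  have invC2: "x + l \<in> C2" if hx: "x \<in> C2" and hl: "l \<in> L" for x l
  proof -
    obtain c a where ca: "c \<in> C" "a \<in> L" "x = c + a" using C2E[OF hx] by blast
    have "a + l \<in> L" using sgL ca(2) hl unfolding add_subgroup_def by blast
    moreover have "x + l = c + (a + l)" using ca(3) by (simp add: algebra_simps)
    ultimately show ?thesis using C2in[OF ca(1)] by (simp only:)
  qed
  have q2: "quot_leb L C2 = emeasure lebesgue (C2 \<inter> F')"
    unfolding quot_leb_def
    by (rule fund_indep[OF sgL Lcnt someI_ex[of "fund_domain L"] fF C2m invC2]) (use fF in blast)+
  have q1: "quot_leb \<Lambda>1 C1 = emeasure lebesgue (C1 \<inter> G')"
    unfolding quot_leb_def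
    by (rule fund_indep[OF assms(1) cnt1 someI_ex[of "fund_domain \<Lambda>1"] fG C1m invC1]) (use fG in blast)+
  have qD: "quot_leb \<Lambda>1 D = emeasure lebesgue (D \<inter> G')"
    unfolding quot_leb_def
    by (rule fund_indep[OF assms(1) cnt1 someI_ex[of "fund_domain \<Lambda>1"] fG Dm invD]) (use fG in blast)+

  define S where "S = {\<nu>\<in>\<Lambda>2. \<exists>x\<in>F'. x + \<nu> \<in> C1}"
  have Sfin: "finite S"
  proof -
    obtain R1 where R1: "\<And>x. x \<in> F' \<Longrightarrow> norm x \<le> R1" using Fb unfolding bounded_iff by blast
    obtain R2 where R2: "\<And>x. x \<in> C \<Longrightarrow> norm x \<le> R2"
      using compact_imp_bounded[OF assms(5)] unfolding bounded_iff by blast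
    define \<psi> where "\<psi> p = (SOME \<nu>. \<nu> \<in> \<Lambda>2 \<and> (\<exists>a\<in>\<Lambda>1. p = a + - \<nu>))" for p
    have "S \<subseteq> \<psi> ` (L \<inter> cball 0 (R1 + R2))"
    proof
      fix \<nu> assume "\<nu> \<in> S"
      then obtain x where x: "\<nu> \<in> \<Lambda>2" "x \<in> F'" "x + \<nu> \<in> C1" unfolding S_def by blast
      then obtain c a where ca: "c \<in> C" "a \<in> \<Lambda>1" "x + \<nu> = c + a" using C1E by blast
      define p where "p = a + - \<nu>"
      have "p = x - c" using ca(3) unfolding p_def by (simp add: algebra_simps)
      then have "norm p \<le> R1 + R2" using R1[OF x(2)] R2[OF ca(1)] norm_triangle_ineq4[of x c] by simp
      moreover have "p \<in> L" unfolding p_def by (rule Lin[OF ca(2) g2(3)[OF x(1)]])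
      moreover have "\<psi> p = \<nu>"
        unfolding \<psi>_def
      proof (rule some_equality)
        show "\<nu> \<in> \<Lambda>2 \<and> (\<exists>a\<in>\<Lambda>1. p = a + - \<nu>)" using x(1) ca(2) p_def by blast
        fix \<nu>' assume "\<nu>' \<in> \<Lambda>2 \<and> (\<exists>a\<in>\<Lambda>1. p = a + - \<nu>')"
        then obtain a' where a': "\<nu>' \<in> \<Lambda>2" "a' \<in> \<Lambda>1" "p = a' + - \<nu>'" by blast
        have eq: "a' + - \<nu>' = a + - \<nu>" using a'(3) p_def by metis
        have "- \<nu>' = - \<nu>" using direct[OF a'(2) g2(3)[OF a'(1)] ca(2) g2(3)[OF x(1)] eq] by blast
        then show "\<nu>' = \<nu>" by simp
      qed
      ultimately have "p \<in> L \<inter> cball 0 (R1 + R2)" "\<nu> = \<psi> p" by (simp_all add: dist_norm)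
      then show "\<nu> \<in> \<psi> ` (L \<inter> cball 0 (R1 + R2))" by (rule rev_image_eqI)
    qed
    moreover have "finite (L \<inter> cball 0 (R1 + R2))" by (rule Lfin) simp
    ultimately show ?thesis using finite_surj by blast
  qed
  define E where "E \<nu> = F' \<inter> {x. x + \<nu> \<in> C1}" for \<nu>
  define Dl where "Dl \<nu> = F' \<inter> {x. x + \<nu> \<in> D}" for \<nu>
  have Em: "E \<nu> \<in> sets lebesgue" for \<nu>
    unfolding E_def shift_eq using Fm tr_sets[OF C1m] by blast
  have Dlm: "Dl \<nu> \<in> sets lebesgue" for \<nu>
    unfolding Dl_def shift_eq using Fm tr_sets[OF Dm] by blast
  have DC1: "D \<subseteq> C1" unfolding D_def by auto
  have DlE: "Dl \<nu> \<subseteq> E \<nu>" for \<nu> unfolding Dl_def E_def using DC1 by auto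
  have eq2: "C2 \<inter> F' = (\<Union>\<nu>\<in>S. E \<nu>)"
  proof
    show "C2 \<inter> F' \<subseteq> (\<Union>\<nu>\<in>S. E \<nu>)"
    proof
      fix x assume x: "x \<in> C2 \<inter> F'"
      then obtain c l where "c \<in> C" "l \<in> L" "x = c + l" using C2E by blast
      then obtain a b where ab0: "a \<in> \<Lambda>1" "b \<in> \<Lambda>2" "l = a + b" using LE by blast
      then have ab: "a \<in> \<Lambda>1" "b \<in> \<Lambda>2" "x = c + a + b" using \<open>x = c + l\<close> by (simp_all add: add.assoc)
      have "x + - b = c + a" using ab(3) by simp
      then have "x + - b \<in> C1" using C1in[OF \<open>c \<in> C\<close> ab(1)] by simp
      moreover have "- b \<in> \<Lambda>2" using g2(3) ab(2) by blast
      ultimately show "x \<in> (\<Union>\<nu>\<in>S. E \<nu>)" using x unfolding S_def E_def by blast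
    qed
    show "(\<Union>\<nu>\<in>S. E \<nu>) \<subseteq> C2 \<inter> F'"
    proof
      fix x assume "x \<in> (\<Union>\<nu>\<in>S. E \<nu>)"
      then obtain \<nu> where \<nu>: "\<nu> \<in> \<Lambda>2" "x \<in> F'" "x + \<nu> \<in> C1" unfolding S_def E_def by blast
      then obtain c a where ca: "c \<in> C" "a \<in> \<Lambda>1" "x + \<nu> = c + a" using C1E by blast
      have "x = c + (a + - \<nu>)" using ca(3) by (simp add: algebra_simps)
      moreover have "a + - \<nu> \<in> L" by (rule Lin[OF ca(2) g2(3)[OF \<nu>(1)]])
      ultimately show "x \<in> C2 \<inter> F'" using C2in[OF ca(1)] \<nu>(2) by simp
    qed
  qed
  have disjF: "\<nu> = \<nu>'" if "\<nu> \<in> \<Lambda>2" "\<nu>' \<in> \<Lambda>2" "x \<in> F'" "x' \<in> F'" "x + \<nu> = x' + \<nu>'" for \<nu> \<nu>' x x'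
  proof -
    have e2: "(x + \<nu>) - \<nu>' = x'" using that(5) by (metis add_diff_cancel_right')
    have "(x + \<nu>) - \<nu> \<in> F'" "(x + \<nu>) - \<nu>' \<in> F'" using that(3,4) e2 by simp_all
    moreover have "\<nu> \<in> L" "\<nu>' \<in> L" using that L2sub by auto
    ultimately show ?thesis using fund_unique_minus[OF sgL fF, of "x + \<nu>"] by blast
  qed
  have sumE: "emeasure lebesgue (X \<inter> G') = (\<Sum>\<nu>\<in>S. emeasure lebesgue (F' \<inter> {x. x + \<nu> \<in> X}))"
    if XC1: "X \<subseteq> C1" and Xm: "X \<in> sets lebesgue" for X
  proof -
    define Y where "Y \<nu> = (\<lambda>x. x + \<nu>) ` (F' \<inter> {x. x + \<nu> \<in> X})" for \<nu>
    have Ym: "Y \<nu> \<in> sets lebesgue" for \<nu>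
      unfolding Y_def shift_eq using Fm tr_sets[OF Xm] by (intro tr_sets) blast
    have "X \<inter> G' = (\<Union>\<nu>\<in>S. Y \<nu>)"
    proof
      show "X \<inter> G' \<subseteq> (\<Union>\<nu>\<in>S. Y \<nu>)"
      proof
        fix y assume y: "y \<in> X \<inter> G'"
        then obtain \<nu> where \<nu>: "\<nu> \<in> \<Lambda>2" "y - \<nu> \<in> F'" unfolding G'_def by blast
        have "(y - \<nu>) + \<nu> \<in> X" using y by simp
        then have "\<nu> \<in> S" unfolding S_def using \<nu> XC1 by blast
        moreover have "y \<in> Y \<nu>" unfolding Y_def using \<nu> y
          by (intro image_eqI[of _ _ "y - \<nu>"]) auto
        ultimately show "y \<in> (\<Union>\<nu>\<in>S. Y \<nu>)" by blast
      qed
      show "(\<Union>\<nu>\<in>S. Y \<nu>) \<subseteq> X \<inter> G'"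
      proof
        fix y assume "y \<in> (\<Union>\<nu>\<in>S. Y \<nu>)"
        then obtain \<nu> x where nx: "\<nu> \<in> S" "x \<in> F'" "x + \<nu> \<in> X" "y = x + \<nu>" unfolding Y_def by blast
        then have "\<nu> \<in> \<Lambda>2" unfolding S_def by blast
        moreover have "y - \<nu> = x" using nx by simp
        ultimately have "y \<in> G'" unfolding G'_def mem_Collect_eq using nx(2)
          by (intro bexI[of _ \<nu>]) simp_all
        moreover have "y \<in> X" using nx by simp
        ultimately show "y \<in> X \<inter> G'" by blast
      qed
    qed
    moreover have "disjoint_family_on Y S"
    proof (unfold disjoint_family_on_def, intro ballI impI)
      fix m n assume mn: "m \<in> S" "n \<in> S" "m \<noteq> n"
      have mn2: "m \<in> \<Lambda>2" "n \<in> \<Lambda>2" using mn(1,2) unfolding S_def by auto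
      show "Y m \<inter> Y n = {}"
      proof (rule ccontr)
        assume "Y m \<inter> Y n \<noteq> {}"
        then obtain y where "y \<in> Y m" "y \<in> Y n" by blast
        then obtain x x' where xx: "x \<in> F'" "y = x + m" "x' \<in> F'" "y = x' + n" unfolding Y_def by blast
        then have "x + m = x' + n" by simp
        then have "m = n" by (rule disjF[OF mn2 xx(1) xx(3)])
        with mn(3) show False ..
      qed
    qed
    ultimately have XGe: "X \<inter> G' = (\<Union>\<nu>\<in>S. Y \<nu>)" and disjY: "disjoint_family_on Y S" by blast+
    have "(\<Sum>\<nu>\<in>S. emeasure lebesgue (Y \<nu>)) = emeasure lebesgue (\<Union>\<nu>\<in>S. Y \<nu>)"
      by (rule sum_emeasure[OF _ disjY Sfin]) (use Ym in blast)
    then have "emeasure lebesgue (X \<inter> G') = (\<Sum>\<nu>\<in>S. emeasure lebesgue (Y \<nu>))"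
      unfolding XGe by (rule sym)
    then show ?thesis unfolding Y_def tr_emeas .
  qed
  have s1: "emeasure lebesgue (C1 \<inter> G') = (\<Sum>\<nu>\<in>S. emeasure lebesgue (E \<nu>))"
    unfolding E_def by (rule sumE[OF order_refl C1m])
  have sD: "emeasure lebesgue (D \<inter> G') = (\<Sum>\<nu>\<in>S. emeasure lebesgue (Dl \<nu>))"
    unfolding Dl_def by (rule sumE[OF DC1 Dm])

  have pw: "indicator (\<Union>\<nu>\<in>S. E \<nu>) x + (\<Sum>\<nu>\<in>S. indicator (Dl \<nu>) x) / 2
              \<le> (\<Sum>\<nu>\<in>S. indicator (E \<nu>) x :: ennreal)" for x
  proof -
    define T where "T = {\<nu>\<in>S. x \<in> E \<nu>}"
    have Tfin: "finite T" using Sfin T_def by simp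
    have sE: "(\<Sum>\<nu>\<in>S. indicator (E \<nu>) x :: ennreal) = of_nat (card T)"
    proof -
      have "(\<Sum>\<nu>\<in>S. indicator (E \<nu>) x :: ennreal) = (\<Sum>\<nu>\<in>S. indicator T \<nu>)"
        by (rule sum.cong) (auto simp: T_def indicator_def)
      also have "\<dots> = (\<Sum>\<nu>\<in>S \<inter> T. (1::ennreal))"
        using sum.inter_restrict[OF Sfin, of "\<lambda>_. 1::ennreal" T] by (simp add: indicator_def of_bool_def)
      also have "\<dots> = of_nat (card (S \<inter> T))" by simp
      also have "S \<inter> T = T" unfolding T_def by auto
      finally show ?thesis .
    qed
    have sDle: "(\<Sum>\<nu>\<in>S. indicator (Dl \<nu>) x :: ennreal) \<le> (\<Sum>\<nu>\<in>S. indicator (E \<nu>) x)"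
      by (intro sum_mono) (use DlE in \<open>auto simp: indicator_def\<close>)
    have ind1: "indicator (\<Union>\<nu>\<in>S. E \<nu>) x \<le> (1::ennreal)" by (simp add: indicator_def)
    show ?thesis
    proof (cases "\<exists>\<nu>0\<in>S. x \<in> Dl \<nu>0")
      case True
      then obtain \<nu>0 where \<nu>0: "\<nu>0 \<in> S" "x \<in> Dl \<nu>0" by blast
      then have xF: "x \<in> F'" "x + \<nu>0 \<in> D" unfolding Dl_def by auto
      then obtain \<mu> where \<mu>: "\<mu> \<in> \<Lambda>2" "\<mu> \<noteq> 0" "x + \<nu>0 - \<mu> \<in> C1" unfolding D_def by blast
      define \<nu>' where "\<nu>' = \<nu>0 + - \<mu>"
      have "\<nu>0 \<in> \<Lambda>2" using \<nu>0(1) S_def by auto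
      then have "\<nu>' \<in> \<Lambda>2" unfolding \<nu>'_def using g2 \<mu>(1) by blast
      moreover have "x + \<nu>' \<in> C1" using \<mu>(3) unfolding \<nu>'_def by (simp add: algebra_simps)
      ultimately have "\<nu>' \<in> T" using xF(1) unfolding T_def S_def E_def by blast
      moreover have "\<nu>0 \<in> T" using \<nu>0 DlE unfolding T_def by blast
      moreover have "\<nu>' \<noteq> \<nu>0" using \<mu>(2) unfolding \<nu>'_def by simp
      ultimately have sub: "{\<nu>0, \<nu>'} \<subseteq> T" and ne: "\<nu>' \<noteq> \<nu>0" by auto
      have "card {\<nu>0, \<nu>'} \<le> card T" by (rule card_mono[OF Tfin sub])
      moreover have "card {\<nu>0, \<nu>'} = 2" using ne by simp
      ultimately have "2 \<le> card T" by simp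
      then show ?thesis unfolding sE using ennr_aux[OF ind1 sDle[unfolded sE]] by blast
    next
      case False
      then have "(\<Sum>\<nu>\<in>S. indicator (Dl \<nu>) x :: ennreal) = 0" by (auto simp: indicator_def)
      moreover have "indicator (\<Union>\<nu>\<in>S. E \<nu>) x \<le> (of_nat (card T) :: ennreal)"
      proof (cases "x \<in> (\<Union>\<nu>\<in>S. E \<nu>)")
        case True
        then have "T \<noteq> {}" unfolding T_def by auto
        then have "1 \<le> card T" using Tfin by (simp add: Suc_le_eq card_gt_0_iff)
        then show ?thesis using True by simp
      qed simp
      ultimately show ?thesis unfolding sE by simp
    qed
  qed
  have UEm: "(\<Union>\<nu>\<in>S. E \<nu>) \<in> sets lebesgue" using Sfin Em by (intro sets.finite_UN) auto
  have main: "emeasure lebesgue (\<Union>\<nu>\<in>S. E \<nu>) + (\<Sum>\<nu>\<in>S. emeasure lebesgue (Dl \<nu>)) / 2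
               \<le> (\<Sum>\<nu>\<in>S. emeasure lebesgue (E \<nu>))"
  proof -
    have "emeasure lebesgue (\<Union>\<nu>\<in>S. E \<nu>) + (\<Sum>\<nu>\<in>S. emeasure lebesgue (Dl \<nu>)) / 2
        = (\<integral>\<^sup>+x. indicator (\<Union>\<nu>\<in>S. E \<nu>) x \<partial>lebesgue)
          + (\<integral>\<^sup>+x. (\<Sum>\<nu>\<in>S. indicator (Dl \<nu>) x) \<partial>lebesgue) / 2"
      using UEm Dlm by (simp add: nn_integral_sum)
    also have "\<dots> = (\<integral>\<^sup>+x. indicator (\<Union>\<nu>\<in>S. E \<nu>) x + (\<Sum>\<nu>\<in>S. indicator (Dl \<nu>) x) / 2 \<partial>lebesgue)"
      using UEm Dlm by (simp add: nn_integral_add nn_integral_divide)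
    also have "\<dots> \<le> (\<integral>\<^sup>+x. (\<Sum>\<nu>\<in>S. indicator (E \<nu>) x) \<partial>lebesgue)"
      by (intro nn_integral_mono pw)
    also have "\<dots> = (\<Sum>\<nu>\<in>S. emeasure lebesgue (E \<nu>))"
      using Em by (simp add: nn_integral_sum)
    finally show ?thesis .
  qed
  have "quot_leb L C2 + quot_leb \<Lambda>1 D / 2 \<le> quot_leb \<Lambda>1 C1"
    unfolding q1 q2 qD s1 sD eq2 using main .
  then have "quot_leb L C2 \<le> quot_leb \<Lambda>1 C1 - quot_leb \<Lambda>1 D / 2"
    using ennreal_le_minus_iff by blast
  then show ?thesis unfolding Deq[unfolded C1_def] unfolding C1_def C2_def L_def .
qed

end
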